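(* Let $u:[0,\infty)\to\mathbb{R}\cup\{-\infty\}$ be twice continuously differentiable on $(0,\infty)$ with $u'>0$, $u''<0$ on $(0,\infty)$ and $\lim_{x\downarrow 0}u'(x)=\infty$, and let $(\beta,R,Y)$ be a random vector with strictly positive components and finite support. For $w>0$ let $c(w)$ be the unique solution of $\max_c u(c)+\mathbb{E}[\beta u(R(w-c)+Y)]$ subject to $c>0$ and $R(w-c)+Y\ge 0$ in every state, let $s(w)=w-c(w)$, and let $S=s((0,\infty))$ (an open interval). Define $g:S\to(0,\infty)$ by $$g(s)=(u')^{-1}\big(\mathbb{E}[\beta R\,u'(Rs+Y)]\big).$$ If the consumption function $c$ is concave on $(0,\infty)$, then $g$ is concave on $S$.
   Context: It is known (and may be used) that $c$ and $s$ are continuously differentiable with $c',s'\in(0,1)$, that the Euler equation $u'(c(w))=\mathbb{E}[\beta R u'(Rs(w)+Y)]$ holds, so $g(s(w))=c(w)$ for all $w>0$, and that $g$ is strictly increasing. *)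

theory Defs
  imports "HOL-Analysis.Analysis" "HOL-Probability.Probability"
begin

text \<open>A state of the world is a triple (beta, R, Y) of reals; the random vector
is a pmf on such triples with finite support.\<close>

type_synonym state = "real \<times> real \<times> real"

definition sbeta :: "state \<Rightarrow> real" where "sbeta x = fst x"
definition sR :: "state \<Rightarrow> real" where "sR x = fst (snd x)"
definition sY :: "state \<Rightarrow> real" where "sY x = snd (snd x)"

definition Exp :: "state pmf \<Rightarrow> (state \<Rightarrow> real) \<Rightarrow> real" where
  "Exp p f = (\<Sum>x\<in>set_pmf p. pmf p x * f x)"

definition EExp :: "state pmf \<Rightarrow> (state \<Rightarrow> ereal) \<Rightarrow> ereal" where
  "EExp p f = (\<Sum>x\<in>set_pmf p. ereal (pmf p x) * f x)"

text \<open>Utility on [0,inf) with values in R \<union> {-inf}: real utility ur on (0,inf),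
value u0 at 0.\<close>
definition uext :: "(real \<Rightarrow> real) \<Rightarrow> ereal \<Rightarrow> real \<Rightarrow> ereal" where
  "uext ur u0 x = (if x > 0 then ereal (ur x) else u0)"

definition feasible :: "state pmf \<Rightarrow> real \<Rightarrow> real \<Rightarrow> bool" where
  "feasible p w c \<longleftrightarrow> c > 0 \<and> (\<forall>x\<in>set_pmf p. sR x * (w - c) + sY x \<ge> 0)"

definition objective :: "(real \<Rightarrow> real) \<Rightarrow> ereal \<Rightarrow> state pmf \<Rightarrow> real \<Rightarrow> real \<Rightarrow> ereal" where
  "objective ur u0 p w c =
     ereal (ur c) + EExp p (\<lambda>x. ereal (sbeta x) * uext ur u0 (sR x * (w - c) + sY x))"

definition gfun :: "(real \<Rightarrow> real) \<Rightarrow> state pmf \<Rightarrow> real \<Rightarrow> real" where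
  "gfun u' p s = the_inv_into {0<..} u' (Exp p (\<lambda>x. sbeta x * sR x * u' (sR x * s + sY x)))"

end

theory Submission
  imports Defs
begin

theorem lemma2:
  fixes ur u' u'' :: "real \<Rightarrow> real" and u0 :: ereal
    and p :: "state pmf" and c c' :: "real \<Rightarrow> real"
  assumes u0: "u0 \<noteq> \<infinity>"
    and du: "\<And>x. x > 0 \<Longrightarrow> (ur has_real_derivative u' x) (at x)"
    and ddu: "\<And>x. x > 0 \<Longrightarrow> (u' has_real_derivative u'' x) (at x)"
    and ddu_cont: "continuous_on {0<..} u''"
    and u'_pos: "\<And>x. x > 0 \<Longrightarrow> u' x > 0"
    and u''_neg: "\<And>x. x > 0 \<Longrightarrow> u'' x < 0"
    and inada: "filterlim u' at_top (at_right 0)"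
    and fin: "finite (set_pmf p)"
    and pos: "\<And>x. x \<in> set_pmf p \<Longrightarrow> sbeta x > 0 \<and> sR x > 0 \<and> sY x > 0"
    and c_opt: "\<And>w. w > 0 \<Longrightarrow> feasible p w (c w) \<and>
                  (\<forall>d. feasible p w d \<and> d \<noteq> c w \<longrightarrow> objective ur u0 p w d < objective ur u0 p w (c w))"
    \<comment> \<open>known facts from the context\<close>
    and c_deriv: "\<And>w. w > 0 \<Longrightarrow> (c has_real_derivative c' w) (at w)"
    and c'_cont: "continuous_on {0<..} c'"
    and c'_bounds: "\<And>w. w > 0 \<Longrightarrow> 0 < c' w \<and> c' w < 1"
    and euler: "\<And>w. w > 0 \<Longrightarrow>
                  u' (c w) = Exp p (\<lambda>x. sbeta x * sR x * u' (sR x * (w - c w) + sY x))"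
    and g_s: "\<And>w. w > 0 \<Longrightarrow> gfun u' p (w - c w) = c w"
    and g_mono: "strict_mono_on ((\<lambda>w. w - c w) ` {0<..}) (gfun u' p)"
    \<comment> \<open>hypothesis of the lemma\<close>
    and c_concave: "concave_on {0<..} c"
  shows "concave_on ((\<lambda>w. w - c w) ` {0<..}) (gfun u' p)"
proof -
  define s where "s = (\<lambda>w::real. w - c w)"
  have sd: "(s has_real_derivative (1 - c' w)) (at w)" if "w > 0" for w
    unfolding s_def using c_deriv[OF that] by (auto intro!: derivative_eq_intros)
  have cont: "continuous_on {0<..} s"
    by (meson DERIV_isCont continuous_at_imp_continuous_on greaterThan_iff sd)
  have smono: "s a < s b" if "0 < a" "a < b" for a b
  proof (rule DERIV_pos_imp_increasing[OF that(2)])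
    fix x assume "a \<le> x" "x \<le> b"
    hence "x > 0" using that by linarith
    thus "\<exists>y. DERIV s x :> y \<and> y > 0"
      using sd[of x] c'_bounds[of x] by (intro exI[of _ "1 - c' x"]) simp
  qed
  have cvx: "convex (s ` {0<..})"
  proof -
    have "connected (s ` {0<..})"
      by (rule connected_continuous_image[OF cont]) simp
    thus ?thesis by (simp add: connected_convex_1)
  qed
  show ?thesis
    unfolding s_def[symmetric]
  proof (rule concave_on_linorderI[OF _ cvx])
    fix t x y :: real assume t: "0 < t" "t < 1" and x: "x \<in> s ` {0<..}" and y: "y \<in> s ` {0<..}" and xy: "x < y"
    obtain a where a: "a > 0" "x = s a" using x by auto
    obtain b where b: "b > 0" "y = s b" using y by auto
    have ab: "a < b"
      using smono a b xy by (metis linorder_neqE_linordered_idom order_less_asym)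
    define z where "z = (1 - t) *\<^sub>R x + t *\<^sub>R y"
    have zx1: "x \<le> z"
    proof -
      have "t * x \<le> t * y" using t xy by (intro mult_left_mono) auto
      thus ?thesis unfolding z_def by (simp add: algebra_simps)
    qed
    have zx2: "z \<le> y"
    proof -
      have "(1 - t) * x \<le> (1 - t) * y" using t xy by (intro mult_left_mono) auto
      thus ?thesis unfolding z_def by (simp add: algebra_simps)
    qed
    have zx: "s a \<le> z" "z \<le> s b" using zx1 zx2 a b by auto
    have "continuous_on {a..b} s" using cont by (rule continuous_on_subset) (use a in auto)
    then obtain w where w: "a \<le> w" "w \<le> b" "s w = z"
      using IVT'[OF zx less_imp_le[OF ab]] by blast
    define m where "m = (w - a) / (b - a)"
    have mba: "m * (b - a) = w - a" using ab unfolding m_def by simp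
    have m3: "w = (1 - m) * a + m * b"
    proof -
      have "(1 - m) * a + m * b = a + m * (b - a)" by (simp add: algebra_simps)
      thus ?thesis using mba by simp
    qed
    have m: "0 \<le> m" "m \<le> 1" "w = (1 - m) * a + m * b"
      using w ab m3 unfolding m_def by (auto simp: field_simps)
    have conc: "c w \<ge> (1 - m) * c a + m * c b"
      using concave_onD[OF c_concave m(1) m(2), of a b] a b m(3) by simp
    have sw: "w - c w = (1 - t) * (a - c a) + t * (b - c b)"
      using w(3) a b unfolding z_def s_def by simp
    have sab: "(b - c b) - (a - c a) > 0" using smono[OF a(1) ab] unfolding s_def by simp
    have e: "c w - ((1 - t) * c a + t * c b) = (m - t) * (b - a)"
    proof -
      have "c w - ((1 - t) * c a + t * c b) = w - ((1 - t) * a + t * b)"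
        using sw by (simp add: algebra_simps)
      also have "\<dots> = (m - t) * (b - a)" using m3 by (simp add: algebra_simps)
      finally show ?thesis .
    qed
    have "c w - ((1 - m) * c a + m * c b) = (m - t) * ((b - c b) - (a - c a))"
      using e by (simp add: algebra_simps)
    hence "(m - t) * ((b - c b) - (a - c a)) \<ge> 0" using conc by linarith
    hence "m \<ge> t" using sab by (simp add: zero_le_mult_iff)
    hence "c w - ((1 - t) * c a + t * c b) \<ge> 0" using e ab by simp
    moreover have "gfun u' p z = c w" using g_s[of w] w(3) a w(1) unfolding s_def by simp
    ultimately show "(1 - t) * gfun u' p x + t * gfun u' p y \<le> gfun u' p ((1 - t) *\<^sub>R x + t *\<^sub>R y)"
      using g_s a b unfolding z_def s_def by simp
  qed
qed

end
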